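(* Let $(X,d,\preceq)$ be an ordered metric space such that $(X,d)$ is complete, and let $f,g:X\to X$ satisfy: (i) $f(X)\subseteq g(X)$; (ii) $f$ is $g$-comparable; (iii) $(f,g)$ is compatible; (iv) $g$ is continuous; (v) either $f$ is continuous or $(X,d,\preceq)$ has the $g$-TCC property; (vi) there exists $x_0\in X$ with $g(x_0)\prec\succ f(x_0)$; (vii) there exists $\alpha\in[0,1)$ with $d(fx,fy)\le\alpha\, d(gx,gy)$ for all $x,y\in X$ with $g(x)\prec\succ g(y)$; $(u_0)$ for each $x,y\in X$, $C(fx,fy,\prec\succ,g(X))$ is nonempty. Then $f$ and $g$ have a unique common fixed point.
   Context: An ordered metric space $(X,d,\preceq)$ is a nonempty set $X$ with a metric $d$ and a partial order $\preceq$. For $x,y\in X$, write $x\prec\succ y$ if $x\preceq y$ or $y\preceq x$. $f$ is $g$-comparable if $g(x)\prec\succ g(y)$ implies $f(x)\prec\succ f(y)$. $(f,g)$ is compatible if $\lim_n d(gfx_n,fgx_n)=0$ whenever $\{g(x_n)\}$ and $\{f(x_n)\}$ converge to the same point of $X$. A sequence $\{x_n\}$ is termwise monotone if $x_n\prec\succ x_{n+1}$ for all $n\ge0$. $(X,d,\preceq)$ has the $g$-TCC property if for every termwise monotone sequence $\{x_n\}$ in $X$ converging to $x\in X$ there is a subsequence with $g(x_{n_k})\prec\succ g(x)$ for all $k$. For $E\subseteq X$ and $a,b\in E$, $C(a,b,\prec\succ,E)$ is the class of finite families $e_1,\dots,e_k\in E$ with $k\ge2$, $e_1=a$, $e_k=b$,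 and $e_i\prec\succ e_{i+1}$ for $1\le i\le k-1$. A common fixed point is $x\in X$ with $x=g(x)=f(x)$. *)

theory Defs
  imports "HOL-Analysis.Analysis"
begin

definition is_partial_order :: "('a \<Rightarrow> 'a \<Rightarrow> bool) \<Rightarrow> bool" where
  "is_partial_order le \<longleftrightarrow> (\<forall>x. le x x) \<and> (\<forall>x y. le x y \<and> le y x \<longrightarrow> x = y)
     \<and> (\<forall>x y z. le x y \<and> le y z \<longrightarrow> le x z)"

definition comparable :: "('a \<Rightarrow> 'a \<Rightarrow> bool) \<Rightarrow> 'a \<Rightarrow> 'a \<Rightarrow> bool" where
  "comparable le x y \<longleftrightarrow> le x y \<or> le y x"

definition g_comparable :: "('a \<Rightarrow> 'a \<Rightarrow> bool) \<Rightarrow> ('a \<Rightarrow> 'a) \<Rightarrow> ('a \<Rightarrow> 'a) \<Rightarrow> bool" where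
  "g_comparable le f g \<longleftrightarrow> (\<forall>x y. comparable le (g x) (g y) \<longrightarrow> comparable le (f x) (f y))"

definition compatible :: "('a::metric_space \<Rightarrow> 'a) \<Rightarrow> ('a \<Rightarrow> 'a) \<Rightarrow> bool" where
  "compatible f g \<longleftrightarrow> (\<forall>xs :: nat \<Rightarrow> 'a. \<forall>z.
      (\<lambda>n. g (xs n)) \<longlonglongrightarrow> z \<and> (\<lambda>n. f (xs n)) \<longlonglongrightarrow> z
      \<longrightarrow> (\<lambda>n. dist (g (f (xs n))) (f (g (xs n)))) \<longlonglongrightarrow> 0)"

definition termwise_monotone :: "('a \<Rightarrow> 'a \<Rightarrow> bool) \<Rightarrow> (nat \<Rightarrow> 'a) \<Rightarrow> bool" where
  "termwise_monotone le xs \<longleftrightarrow> (\<forall>n. comparable le (xs n) (xs (Suc n)))"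

definition g_TCC :: "('a::metric_space \<Rightarrow> 'a \<Rightarrow> bool) \<Rightarrow> ('a \<Rightarrow> 'a) \<Rightarrow> bool" where
  "g_TCC le g \<longleftrightarrow> (\<forall>(xs::nat \<Rightarrow> 'a) x. termwise_monotone le xs \<and> xs \<longlonglongrightarrow> x \<longrightarrow>
      (\<exists>r::nat \<Rightarrow> nat. strict_mono r \<and> (\<forall>k. comparable le (g (xs (r k))) (g x))))"

text \<open>C(a,b,\<prec>\<succ>,E) as a set of lists [e_1,...,e_k], k \<ge> 2.\<close>
definition chain_class :: "('a \<Rightarrow> 'a \<Rightarrow> bool) \<Rightarrow> 'a \<Rightarrow> 'a \<Rightarrow> 'a set \<Rightarrow> 'a list set" where
  "chain_class le a b E = {es. length es \<ge> 2 \<and> set es \<subseteq> E \<and> hd es = a \<and> last es = b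
      \<and> (\<forall>i. Suc i < length es \<longrightarrow> comparable le (es ! i) (es ! Suc i))}"

end

theory Submission
  imports Defs
begin

lemma geom_cauchy:
  fixes y :: "nat \<Rightarrow> 'a::metric_space"
  assumes c: "0 \<le> c" "c < 1" and d: "\<And>n. dist (y n) (y (Suc n)) \<le> c^n * D"
  shows "Cauchy y"
proof -
  have D: "0 \<le> D" using order_trans[OF zero_le_dist d[of 0]] by simp
  have key: "(1 - c) * dist (y m) (y (m + k)) \<le> c^m * D * (1 - c^k)" for m k
  proof (induct k)
    case 0 then show ?case by simp
  next
    case (Suc k)
    from c have "(1 - c) * dist (y m) (y (m + Suc k)) \<le>
        (1 - c) * (dist (y m) (y (m + k)) + dist (y (m + k)) (y (Suc (m + k))))"
      by (simp add: dist_triangle)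
    also from c d[of "m + k"] have "\<dots> \<le> (1 - c) * (dist (y m) (y (m + k)) + c ^ (m + k) * D)"
      by simp
    also from Suc have "\<dots> \<le> c ^ m * D * (1 - c ^ k) + (1 - c) * c ^ (m + k) * D"
      by (simp add: field_simps)
    also have "\<dots> = (c ^ m) * (D * (1 - c ^ k) + (1 - c) * c ^ k * D)"
      by (simp add: power_add field_simps)
    also from c have "\<dots> \<le> (c ^ m) * D * (1 - c ^ Suc k)"
      by (simp add: field_simps)
    finally show ?case .
  qed
  have bnd: "dist (y m) (y (m + k)) \<le> c^m * D / (1 - c)" for m k
  proof -
    have "c^m * D * (1 - c^k) \<le> c^m * D"
      using c D by (simp add: mult_left_le zero_le_power)
    with key[of m k] have "(1 - c) * dist (y m) (y (m + k)) \<le> c^m * D" by linarith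
    then show ?thesis using c by (simp add: pos_le_divide_eq mult.commute)
  qed
  show ?thesis
  proof (rule metric_CauchyI)
    fix e :: real assume e: "e > 0"
    have "(\<lambda>n. c^n * D / (1 - c)) \<longlonglongrightarrow> 0"
      using c by (intro tendsto_divide_zero tendsto_mult_left_zero LIMSEQ_power_zero) auto
    from order_tendstoD(2)[OF this e] obtain N where N: "\<And>n. n \<ge> N \<Longrightarrow> c^n * D / (1 - c) < e"
      by (auto simp: eventually_sequentially)
    have "dist (y m) (y n) < e" if "m \<ge> N" "n \<ge> N" for m n
    proof (cases "m \<le> n")
      case True
      then show ?thesis using bnd[of m "n - m"] N[of m] that by simp
    next
      case False
      then show ?thesis using bnd[of n "m - n"] N[of n] that by (simp add: dist_commute)
    qed
    then show "\<exists>M. \<forall>m\<ge>M. \<forall>n\<ge>M. dist (y m) (y n) < e" by blast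
  qed
qed

theorem theorem4p6:
  fixes le :: "'a::complete_space \<Rightarrow> 'a \<Rightarrow> bool"
    and f g :: "'a \<Rightarrow> 'a"
  assumes "is_partial_order le"
    and "f ` UNIV \<subseteq> g ` UNIV"
    and "g_comparable le f g"
    and "compatible f g"
    and "continuous_on UNIV g"
    and "continuous_on UNIV f \<or> g_TCC le g"
    and "\<exists>x0. comparable le (g x0) (f x0)"
    and "\<exists>\<alpha>::real. 0 \<le> \<alpha> \<and> \<alpha> < 1 \<and>
           (\<forall>x y. comparable le (g x) (g y) \<longrightarrow> dist (f x) (f y) \<le> \<alpha> * dist (g x) (g y))"
    and "\<forall>x y. chain_class le (f x) (f y) (g ` UNIV) \<noteq> {}"
  shows "\<exists>!x. g x = x \<and> f x = x"
proof -
  obtain \<alpha> :: real where al: "0 \<le> \<alpha>" "\<alpha> < 1"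
    and con: "\<And>x y. comparable le (g x) (g y) \<Longrightarrow> dist (f x) (f y) \<le> \<alpha> * dist (g x) (g y)"
    using assms(8) by blast
  have refl: "comparable le x x" for x using assms(1) by (simp add: is_partial_order_def comparable_def)
  have gcomp: "comparable le (g x) (g y) \<Longrightarrow> comparable le (f x) (f y)" for x y
    using assms(3) by (simp add: g_comparable_def)
  define T where "T p = (SOME q. g q = f p)" for p
  have Tg: "g (T p) = f p" for p
  proof -
    have "f p \<in> range g" using assms(2) by blast
    then have "\<exists>q. g q = f p" by (metis imageE)
    then show ?thesis unfolding T_def by (rule someI_ex)
  qed
  have K: "comparable le (g ((T^^n) p)) (g ((T^^n) q)) \<and>
       dist (g ((T^^n) p)) (g ((T^^n) q)) \<le> \<alpha>^n * dist (g p) (g q)"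
    if "comparable le (g p) (g q)" for n p q
  proof (induct n)
    case 0 then show ?case using that by simp
  next
    case (Suc n)
    then have c1: "comparable le (f ((T^^n) p)) (f ((T^^n) q))" using gcomp by blast
    have "dist (f ((T^^n) p)) (f ((T^^n) q)) \<le> \<alpha> * dist (g ((T^^n) p)) (g ((T^^n) q))"
      using con Suc by blast
    also have "\<dots> \<le> \<alpha> * (\<alpha>^n * dist (g p) (g q))"
      using Suc al by (simp add: mult_left_mono)
    finally show ?case using c1 by (simp add: Tg)
  qed
  have eqK: "g ((T^^n) p) = g ((T^^n) q)" if "g p = g q" for n p q
    using K[of p q n] refl that by simp
  have cconst: "g ((T^^n) u) = g u" if "g u = f u" for u n
  proof (induct n)
    case 0 then show ?case by simp
  next
    case (Suc n)
    have "g ((T^^n) (T u)) = g ((T^^n) u)" using eqK Tg that by metis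
    then show ?case using Suc by (simp add: funpow_Suc_right del: funpow.simps)
  qed
  have lim0: "(\<lambda>n. \<alpha>^n * S) \<longlonglongrightarrow> 0" for S
    using al by (intro tendsto_mult_left_zero LIMSEQ_power_zero) auto
  have uniq: "g u = g v" if u: "g u = f u" and v: "g v = f v" for u v
  proof -
    obtain es where es: "es \<in> chain_class le (f u) (f v) (g ` UNIV)" using assms(9) by blast
    then have len: "length es \<ge> 2" and sub: "set es \<subseteq> range g" and hd: "hd es = f u"
      and la: "last es = f v"
      and ch: "\<And>i. Suc i < length es \<Longrightarrow> comparable le (es ! i) (es ! Suc i)"
      by (auto simp: chain_class_def)
    define P where "P i = (SOME p. g p = es ! i)" for i
    have gP: "g (P i) = es ! i" if "i < length es" for i
    proof -
      have "es ! i \<in> range g" using sub that nth_mem by blast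
      then have "\<exists>p. g p = es ! i" by auto
      then show ?thesis unfolding P_def by (rule someI_ex)
    qed
    have tri: "dist (g ((T^^n) (P 0))) (g ((T^^n) (P j))) \<le> \<alpha>^n * (\<Sum>i<j. dist (es!i) (es!Suc i))"
      if "j < length es" for j n
      using that
    proof (induct j)
      case 0 then show ?case by simp
    next
      case (Suc j)
      have cj: "comparable le (g (P j)) (g (P (Suc j)))" using ch Suc gP by simp
      have "dist (g ((T^^n) (P 0))) (g ((T^^n) (P (Suc j)))) \<le>
          dist (g ((T^^n) (P 0))) (g ((T^^n) (P j))) + dist (g ((T^^n) (P j))) (g ((T^^n) (P (Suc j))))"
        by (rule dist_triangle)
      also have "\<dots> \<le> \<alpha>^n * (\<Sum>i<j. dist (es!i) (es!Suc i)) + \<alpha>^n * dist (es!j) (es!Suc j)"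
        using Suc K[OF cj, of n] gP[of j] gP[of "Suc j"] by (intro add_mono) auto
      finally show ?case by (simp add: distrib_left)
    qed
    have ne: "es \<noteq> []" using len by auto
    have g0: "g (P 0) = g u" using gP[of 0] hd u ne by (simp add: hd_conv_nth)
    have gl: "g (P (length es - 1)) = g v" using gP[of "length es - 1"] la v ne by (simp add: last_conv_nth)
    define S where "S = (\<Sum>i<length es - 1. dist (es!i) (es!Suc i))"
    have bd: "dist (g u) (g v) \<le> \<alpha>^n * S" for n
    proof -
      have "g ((T^^n) (P 0)) = g u" using eqK[OF g0] cconst[OF u] by simp
      moreover have "g ((T^^n) (P (length es - 1))) = g v" using eqK[OF gl] cconst[OF v] by simp
      ultimately show ?thesis using tri[of "length es - 1" n] ne unfolding S_def by simp
    qed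
    have "dist (g u) (g v) \<le> 0"
      by (rule tendsto_le[OF trivial_limit_sequentially lim0[of S] tendsto_const]) (use bd in auto)
    then show ?thesis by simp
  qed
  have gc: "(\<lambda>n. g (s n)) \<longlonglongrightarrow> g a" if "s \<longlonglongrightarrow> a" for s a
    by (rule continuous_on_tendsto_compose[OF assms(5) that]) auto
  obtain x0 where x0: "comparable le (g x0) (f x0)" using assms(7) by blast
  define xs where "xs n = (T^^n) x0" for n
  define y where "y n = g (xs n)" for n
  have yK: "comparable le (y n) (y (Suc n)) \<and> dist (y n) (y (Suc n)) \<le> \<alpha>^n * dist (y 0) (y 1)" for n
  proof -
    have "comparable le (g x0) (g (T x0))" using x0 Tg by simp
    from K[OF this, of n] show ?thesis
      unfolding y_def xs_def by (simp add: funpow_Suc_right del: funpow.simps)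
  qed
  have "Cauchy y" using geom_cauchy[OF al] yK by blast
  then obtain z where yz: "y \<longlonglongrightarrow> z" using Cauchy_convergent_iff convergent_def by blast
  have fxs: "f (xs n) = y (Suc n)" for n unfolding y_def xs_def by (simp add: Tg)
  have gxs: "(\<lambda>n. g (xs n)) \<longlonglongrightarrow> z" using yz unfolding y_def .
  have fxsl: "(\<lambda>n. f (xs n)) \<longlonglongrightarrow> z" unfolding fxs using LIMSEQ_Suc[OF yz] .
  have cmp: "(\<lambda>n. dist (g (f (xs n))) (f (g (xs n)))) \<longlonglongrightarrow> 0"
    using assms(4) gxs fxsl unfolding compatible_def by blast
  have gf: "(\<lambda>n. g (f (xs n))) \<longlonglongrightarrow> g z" using gc[OF fxsl] .
  have gzfz: "g z = f z"
    using assms(6)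
  proof
    assume fc: "continuous_on UNIV f"
    have "(\<lambda>n. f (g (xs n))) \<longlonglongrightarrow> f z"
      by (rule continuous_on_tendsto_compose[OF fc gxs]) auto
    then have "(\<lambda>n. dist (g (f (xs n))) (f (g (xs n)))) \<longlonglongrightarrow> dist (g z) (f z)"
      using gf by (intro tendsto_dist)
    then have "dist (g z) (f z) = 0" using cmp LIMSEQ_unique by blast
    then show ?thesis by simp
  next
    assume tcc: "g_TCC le g"
    have "termwise_monotone le y" using yK by (simp add: termwise_monotone_def)
    then obtain r :: "nat \<Rightarrow> nat" where r: "strict_mono r" and rc: "\<And>k. comparable le (g (y (r k))) (g z)"
    proof -
      have "\<exists>r::nat\<Rightarrow>nat. strict_mono r \<and> (\<forall>k. comparable le (g (y (r k))) (g z))"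
        using tcc[unfolded g_TCC_def, rule_format, of y z] yz \<open>termwise_monotone le y\<close> by auto
      then show ?thesis using that by blast
    qed
    have gyr: "(\<lambda>k. g (y (r k))) \<longlonglongrightarrow> g z" using gc[OF LIMSEQ_subseq_LIMSEQ[OF yz r]]
      by (simp add: o_def)
    have d0: "(\<lambda>k. \<alpha> * dist (g (y (r k))) (g z)) \<longlonglongrightarrow> 0"
      using gyr by (intro tendsto_mult_right_zero) (simp add: tendsto_dist_iff[symmetric])
    have "(\<lambda>k. dist (f (y (r k))) (f z)) \<longlonglongrightarrow> 0"
    proof (rule Lim_null_comparison[OF always_eventually d0], rule allI)
      fix k show "norm (dist (f (y (r k))) (f z)) \<le> \<alpha> * dist (g (y (r k))) (g z)"
        using con[OF rc[of k]] by simp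
    qed
    then have "(\<lambda>k. f (y (r k))) \<longlonglongrightarrow> f z"
      by (subst tendsto_dist_iff)
    then have fyr: "(\<lambda>k. f (g (xs (r k)))) \<longlonglongrightarrow> f z"
      unfolding y_def .
    have "(\<lambda>k. dist (g (f (xs (r k)))) (f (g (xs (r k))))) \<longlonglongrightarrow> dist (g z) (f z)"
      using LIMSEQ_subseq_LIMSEQ[OF gf r] fyr by (intro tendsto_dist) (simp_all add: o_def)
    moreover have "(\<lambda>k. dist (g (f (xs (r k)))) (f (g (xs (r k))))) \<longlonglongrightarrow> 0"
      using LIMSEQ_subseq_LIMSEQ[OF cmp r] by (simp add: o_def)
    ultimately have "dist (g z) (f z) = 0" using LIMSEQ_unique by blast
    then show ?thesis by simp
  qed
  define w where "w = g z"
  have "(\<lambda>n. dist (g (f ((\<lambda>_. z) n))) (f (g ((\<lambda>_. z) n)))) \<longlonglongrightarrow> 0"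
    using assms(4)[unfolded compatible_def, rule_format, of "\<lambda>_. z" "g z"] gzfz by simp
  then have "dist (g (f z)) (f (g z)) = 0" by (simp add: LIMSEQ_const_iff)
  then have gw: "g w = f w" unfolding w_def using gzfz by simp
  have gww: "g w = w" using uniq[OF gw gzfz] w_def by simp
  show ?thesis
  proof (rule ex1I[of _ w])
    show "g w = w \<and> f w = w" using gw gww by simp
  next
    fix x assume "g x = x \<and> f x = x"
    then show "x = w" using uniq[of x w] gw gww by simp
  qed
qed

end
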